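(* Let $w\ge 0$ and let $\mathcal{B}$ be a class of graphs such that $\operatorname{tw}(L(B))\le w$ for every $B\in\mathcal{B}$. Let $\mathcal{C}$ be the class of graphs obtained from graphs in $\mathcal{B}$ by successively applying the bridge operation, i.e., the smallest class containing $\mathcal{B}$ such that whenever $G_1,G_2\in\mathcal{C}$ (taken vertex-disjoint) and $v_1\in V(G_1)$, $v_2\in V(G_2)$ have neighborhoods $N(v_1)=\{x_1,y_1,z_1\}$, $N(v_2)=\{x_2,y_2,z_2\}$, the graph $(G_1-v_1)\cup(G_2-v_2)+x_1x_2+y_1y_2+z_1z_2$ belongs to $\mathcal{C}$. Then every $G\in\mathcal{C}$ satisfies $\operatorname{tw}(G)\le 2w+1$.
   Context: $\operatorname{tw}(H)$ denotes the treewidth of a graph $H$. The line graph $L(F)$ of a graph $F$ is the graph with vertex set $E(F)$ in which two vertices are adjacent exactly when the corresponding edges share an endvertex in $F$. *)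

theory Defs
  imports Main
begin

type_synonym 'a graph = "'a set \<times> 'a set set"

definition verts :: "'a graph \<Rightarrow> 'a set" where "verts G = fst G"
definition edges :: "'a graph \<Rightarrow> 'a set set" where "edges G = snd G"

definition graph :: "'a graph \<Rightarrow> bool" where
  "graph G \<longleftrightarrow> finite (verts G) \<and>
     (\<forall>e\<in>edges G. \<exists>x y. x \<noteq> y \<and> x \<in> verts G \<and> y \<in> verts G \<and> e = {x, y})"

definition nbhd :: "'a graph \<Rightarrow> 'a \<Rightarrow> 'a set" where
  "nbhd G v = {u. {u, v} \<in> edges G}"

definition line_graph :: "'a graph \<Rightarrow> 'a set graph" where
  "line_graph F = (edges F, {{e, f} | e f. e \<in> edges F \<and> f \<in> edges F \<and> e \<noteq> f \<and> e \<inter> f \<noteq> {}})"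

definition connected_in :: "'a graph \<Rightarrow> 'a set \<Rightarrow> bool" where
  "connected_in G S \<longleftrightarrow>
     (\<forall>s\<in>S. \<forall>t\<in>S. (\<lambda>a b. a \<in> S \<and> b \<in> S \<and> {a, b} \<in> edges G)\<^sup>*\<^sup>* s t)"

definition tree :: "'b graph \<Rightarrow> bool" where
  "tree T \<longleftrightarrow> graph T \<and> verts T \<noteq> {} \<and> connected_in T (verts T) \<and>
     card (edges T) = card (verts T) - 1"

definition tree_decomposition :: "'a graph \<Rightarrow> nat graph \<Rightarrow> (nat \<Rightarrow> 'a set) \<Rightarrow> bool" where
  "tree_decomposition G T bag \<longleftrightarrow> tree T \<and>
     (\<forall>t\<in>verts T. bag t \<subseteq> verts G) \<and>
     (\<forall>v\<in>verts G. \<exists>t\<in>verts T. v \<in> bag t) \<and>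
     (\<forall>e\<in>edges G. \<exists>t\<in>verts T. e \<subseteq> bag t) \<and>
     (\<forall>v\<in>verts G. connected_in T {t\<in>verts T. v \<in> bag t})"

text \<open>Treewidth: least k such that G has a tree decomposition with all bags of size at most k+1
  (the empty graph gets treewidth 0 instead of -1).\<close>
definition treewidth :: "'a graph \<Rightarrow> nat" where
  "treewidth G = (LEAST k. \<exists>T bag. tree_decomposition G T bag \<and>
                                   (\<forall>t\<in>verts T. card (bag t) \<le> k + 1))"

definition graph_iso :: "'a graph \<Rightarrow> 'a graph \<Rightarrow> bool" where
  "graph_iso G H \<longleftrightarrow> (\<exists>f. bij_betw f (verts G) (verts H) \<and> edges H = (\<lambda>e. f ` e) ` edges G)"

definition bridge :: "'a graph \<Rightarrow> 'a \<Rightarrow> 'a graph \<Rightarrow> 'a \<Rightarrow> 'a \<Rightarrow> 'a \<Rightarrow> 'a \<Rightarrow> 'a \<Rightarrow> 'a \<Rightarrow> 'a \<Rightarrow> 'a graph" where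
  "bridge G1 v1 G2 v2 x1 y1 z1 x2 y2 z2 =
     ((verts G1 - {v1}) \<union> (verts G2 - {v2}),
      {e \<in> edges G1. v1 \<notin> e} \<union> {e \<in> edges G2. v2 \<notin> e} \<union> {{x1, x2}, {y1, y2}, {z1, z2}})"

text \<open>Closure of a class B under the bridge operation (and under isomorphism, since a
  class of graphs is isomorphism-closed and the operands must be taken vertex-disjoint).\<close>
inductive_set bridge_closure :: "'a graph set \<Rightarrow> 'a graph set" for B :: "'a graph set" where
  base: "G \<in> B \<Longrightarrow> G \<in> bridge_closure B"
| iso: "G \<in> bridge_closure B \<Longrightarrow> graph_iso G H \<Longrightarrow> H \<in> bridge_closure B"
| bridge: "G1 \<in> bridge_closure B \<Longrightarrow> G2 \<in> bridge_closure B \<Longrightarrow>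
     verts G1 \<inter> verts G2 = {} \<Longrightarrow> v1 \<in> verts G1 \<Longrightarrow> v2 \<in> verts G2 \<Longrightarrow>
     nbhd G1 v1 = {x1, y1, z1} \<Longrightarrow> card {x1, y1, z1} = 3 \<Longrightarrow>
     nbhd G2 v2 = {x2, y2, z2} \<Longrightarrow> card {x2, y2, z2} = 3 \<Longrightarrow>
     bridge G1 v1 G2 v2 x1 y1 z1 x2 y2 z2 \<in> bridge_closure B"

end

theory Submission
  imports Defs
begin


abbreviation R :: "'a graph \<Rightarrow> 'a set \<Rightarrow> 'a \<Rightarrow> 'a \<Rightarrow> bool" where
  "R G S \<equiv> (\<lambda>a b. a \<in> S \<and> b \<in> S \<and> {a, b} \<in> edges G)"

lemma R_mono:
  assumes "(R G S)\<^sup>*\<^sup>* s t" "S \<subseteq> S'" "edges G \<subseteq> edges G'"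
  shows "(R G' S')\<^sup>*\<^sup>* s t"
  using assms(1) by (rule rtranclp_mono[THEN predicate2D, rotated]) (use assms(2,3) in auto)

lemma R_end:
  assumes "(R G S)\<^sup>*\<^sup>* s t" "s \<in> S" shows "t \<in> S"
  using assms by (induction rule: rtranclp_induct) auto

lemma connected_in_mono:
  assumes "connected_in G S" "edges G \<subseteq> edges G'" shows "connected_in G' S"
  unfolding connected_in_def
proof (intro ballI)
  fix s t assume "s \<in> S" "t \<in> S"
  then have "(R G S)\<^sup>*\<^sup>* s t" using assms unfolding connected_in_def by blast
  then show "(R G' S)\<^sup>*\<^sup>* s t" by (rule R_mono) (use assms in auto)
qed

lemma connected_in_Union:
  assumes "\<forall>A\<in>F. connected_in G A" "\<forall>A\<in>F. \<forall>B\<in>F. A \<inter> B \<noteq> {}"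
  shows "connected_in G (\<Union>F)"
  unfolding connected_in_def
proof (intro ballI)
  fix s t assume "s \<in> \<Union>F" "t \<in> \<Union>F"
  then obtain A B where AB: "A \<in> F" "B \<in> F" "s \<in> A" "t \<in> B" by auto
  then obtain x where x: "x \<in> A" "x \<in> B" using assms(2) by blast
  have "(R G A)\<^sup>*\<^sup>* s x" using assms(1) AB x unfolding connected_in_def by blast
  then have 1: "(R G (\<Union>F))\<^sup>*\<^sup>* s x" by (rule R_mono) (use AB in auto)
  have "(R G B)\<^sup>*\<^sup>* x t" using assms(1) AB x unfolding connected_in_def by blast
  then have 2: "(R G (\<Union>F))\<^sup>*\<^sup>* x t" by (rule R_mono) (use AB in auto)
  show "(R G (\<Union>F))\<^sup>*\<^sup>* s t" using 1 2 by simp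
qed

lemma connected_in_join:
  assumes "connected_in G1 X1" "connected_in G2 X2" "a \<in> X1" "b \<in> X2"
    "edges G1 \<subseteq> edges G" "edges G2 \<subseteq> edges G" "{a, b} \<in> edges G"
  shows "connected_in G (X1 \<union> X2)"
  unfolding connected_in_def
proof (intro ballI)
  have ab: "(R G (X1 \<union> X2))\<^sup>*\<^sup>* a b" "(R G (X1 \<union> X2))\<^sup>*\<^sup>* b a"
    using assms(3,4,7) by (auto simp: insert_commute)
  have c1: "(R G (X1 \<union> X2))\<^sup>*\<^sup>* s t" if "s \<in> X1" "t \<in> X1" for s t
  proof -
    have "(R G1 X1)\<^sup>*\<^sup>* s t" using assms(1) that unfolding connected_in_def by blast
    then show ?thesis by (rule R_mono) (use assms(5) in auto)
  qed
  have c2: "(R G (X1 \<union> X2))\<^sup>*\<^sup>* s t" if "s \<in> X2" "t \<in> X2" for s t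
  proof -
    have "(R G2 X2)\<^sup>*\<^sup>* s t" using assms(2) that unfolding connected_in_def by blast
    then show ?thesis by (rule R_mono) (use assms(6) in auto)
  qed
  fix s t assume "s \<in> X1 \<union> X2" "t \<in> X1 \<union> X2"
  then show "(R G (X1 \<union> X2))\<^sup>*\<^sup>* s t"
  proof (cases "s \<in> X1")
    case True
    then show ?thesis
    proof (cases "t \<in> X1")
      case False
      then have "t \<in> X2" using \<open>t \<in> X1 \<union> X2\<close> by blast
      have "(R G (X1 \<union> X2))\<^sup>*\<^sup>* s a" using c1 True assms(3) by blast
      also have "(R G (X1 \<union> X2))\<^sup>*\<^sup>* a b" by (rule ab(1))
      also have "(R G (X1 \<union> X2))\<^sup>*\<^sup>* b t" using c2 \<open>t \<in> X2\<close> assms(4) by blast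
      finally show ?thesis .
    qed (use c1 True in blast)
  next
    case False
    then have "s \<in> X2" using \<open>s \<in> X1 \<union> X2\<close> by blast
    then show ?thesis
    proof (cases "t \<in> X2")
      case False
      then have "t \<in> X1" using \<open>t \<in> X1 \<union> X2\<close> by blast
      have "(R G (X1 \<union> X2))\<^sup>*\<^sup>* s b" using c2 \<open>s \<in> X2\<close> assms(4) by blast
      also have "(R G (X1 \<union> X2))\<^sup>*\<^sup>* b a" by (rule ab(2))
      also have "(R G (X1 \<union> X2))\<^sup>*\<^sup>* a t" using c1 \<open>t \<in> X1\<close> assms(3) by blast
      finally show ?thesis .
    qed (use c2 in blast)
  qed
qed



lemma graph_edge: "graph G \<Longrightarrow> e \<in> edges G \<Longrightarrow> \<exists>x y. x \<noteq> y \<and> x \<in> verts G \<and> y \<in> verts G \<and> e = {x, y}"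
  unfolding graph_def by blast

lemma graph_finite: "graph G \<Longrightarrow> finite (verts G)"
  unfolding graph_def by blast

lemma graph_edge_sub: "graph G \<Longrightarrow> e \<in> edges G \<Longrightarrow> e \<subseteq> verts G"
  using graph_edge by fastforce

lemma graph_edge_card: "graph G \<Longrightarrow> e \<in> edges G \<Longrightarrow> card e = 2"
  using graph_edge by fastforce

lemma graph_finite_edges: "graph G \<Longrightarrow> finite (edges G)"
proof -
  assume g: "graph G"
  then have "edges G \<subseteq> Pow (verts G)" using graph_edge_sub by blast
  moreover have "finite (verts G)" using g graph_def by blast
  ultimately show ?thesis by (meson finite_Pow_iff finite_subset)
qed

lemma tree_graph: "tree T \<Longrightarrow> graph T" unfolding tree_def by blast
lemma tree_conn: "tree T \<Longrightarrow> connected_in T (verts T)" unfolding tree_def by blast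
lemma tree_ne: "tree T \<Longrightarrow> verts T \<noteq> {}" unfolding tree_def by blast
lemma tree_card: "tree T \<Longrightarrow> card (edges T) = card (verts T) - 1" unfolding tree_def by blast

lemma verts_pair[simp]: "verts (A, B) = A" by (simp add: verts_def)
lemma edges_pair[simp]: "edges (A, B) = B" by (simp add: edges_def)

lemma tree_glue:
  assumes t1: "tree T1" and t2: "tree T2" and disj: "verts T1 \<inter> verts T2 = {}"
    and a: "a \<in> verts T1" and b: "b \<in> verts T2"
  shows "tree (verts T1 \<union> verts T2, edges T1 \<union> edges T2 \<union> {{a, b}})"
    (is "tree ?T")
proof -
  have g1: "graph T1" and g2: "graph T2" using tree_graph[OF t1] tree_graph[OF t2] .
  have gT: "graph ?T"
    unfolding graph_def verts_pair edges_pair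
  proof (intro conjI ballI)
    show "finite (verts T1 \<union> verts T2)" using graph_finite[OF g1] graph_finite[OF g2] by blast
    fix e assume "e \<in> edges T1 \<union> edges T2 \<union> {{a, b}}"
    then consider "e \<in> edges T1" | "e \<in> edges T2" | "e = {a, b}" by blast
    then show "\<exists>x y. x \<noteq> y \<and> x \<in> verts T1 \<union> verts T2 \<and> y \<in> verts T1 \<union> verts T2 \<and> e = {x, y}"
    proof cases
      case 1 then show ?thesis using graph_edge[OF g1] by blast
    next
      case 2 then show ?thesis using graph_edge[OF g2] by blast
    next
      case 3
      have "a \<noteq> b" using a b disj by blast
      then show ?thesis using 3 a b by blast
    qed
  qed
  have c1: "connected_in T1 (verts T1)" and c2: "connected_in T2 (verts T2)"
    using tree_conn[OF t1] tree_conn[OF t2] .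
  have con: "connected_in ?T (verts ?T)"
    unfolding verts_pair
    by (rule connected_in_join[OF c1 c2 a b]) auto
  have fin1: "finite (edges T1)" "finite (edges T2)" using graph_finite_edges[OF g1] graph_finite_edges[OF g2] .
  have fv: "finite (verts T1)" "finite (verts T2)" using graph_finite[OF g1] graph_finite[OF g2] .
  have ne: "verts T1 \<noteq> {}" "verts T2 \<noteq> {}" using tree_ne[OF t1] tree_ne[OF t2] .
  have d12: "edges T1 \<inter> edges T2 = {}"
  proof (rule ccontr)
    assume "edges T1 \<inter> edges T2 \<noteq> {}"
    then obtain e where "e \<in> edges T1" "e \<in> edges T2" by blast
    then obtain x y where xy: "e = {x,y}" "x \<in> verts T1"
      using graph_edge[OF g1] by blast
    have "e \<subseteq> verts T2" using graph_edge_sub[OF g2] \<open>e \<in> edges T2\<close> by blast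
    then have "x \<in> verts T2" using xy by blast
    then show False using disj xy by blast
  qed
  have nab: "{a, b} \<notin> edges T1 \<union> edges T2"
  proof
    assume "{a, b} \<in> edges T1 \<union> edges T2"
    then have "{a, b} \<subseteq> verts T1 \<or> {a, b} \<subseteq> verts T2"
      using graph_edge_sub[OF g1] graph_edge_sub[OF g2] by blast
    then show False using a b disj by blast
  qed
  have "card (edges ?T) = card (edges T1) + card (edges T2) + 1"
    unfolding edges_pair
    using fin1 d12 nab by (simp add: card_Un_disjoint)
  also have "\<dots> = (card (verts T1) - 1) + (card (verts T2) - 1) + 1"
    using tree_card[OF t1] tree_card[OF t2] by simp
  also have "\<dots> = card (verts ?T) - 1"
  proof -
    have "card (verts T1) > 0" "card (verts T2) > 0" using fv ne by auto
    then show ?thesis using fv disj by (simp add: card_Un_disjoint)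
  qed
  finally have "card (edges ?T) = card (verts ?T) - 1" .
  then show ?thesis unfolding tree_def using gT con ne(1) by simp
qed

lemma R_image:
  assumes "(R G S)\<^sup>*\<^sup>* s t" 
  shows "(R (f ` verts G, (image f) ` edges G) (f ` S))\<^sup>*\<^sup>* (f s) (f t)"
  using assms
proof (induction rule: rtranclp_induct)
  case (step y z)
  then have "{y, z} \<in> edges G" by simp
  then have "f ` {y, z} \<in> (image f) ` edges G" by (rule imageI)
  then have "{f y, f z} \<in> (image f) ` edges G" by simp
  then have "R (f ` verts G, (image f) ` edges G) (f ` S) (f y) (f z)"
    using step by simp
  then show ?case by (rule rtranclp.rtrancl_into_rtrancl[OF step(3)])
qed simp

lemma connected_in_image:
  assumes "connected_in G S"
  shows "connected_in (f ` verts G, (image f) ` edges G) (f ` S)"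
  unfolding connected_in_def
proof (intro ballI)
  fix s' t' assume "s' \<in> f ` S" "t' \<in> f ` S"
  then obtain s t where st: "s \<in> S" "t \<in> S" "s' = f s" "t' = f t" by blast
  then have "(R G S)\<^sup>*\<^sup>* s t" using assms unfolding connected_in_def by blast
  then show "(R (f ` verts G, (image f) ` edges G) (f ` S))\<^sup>*\<^sup>* s' t'"
    unfolding st(3,4) by (rule R_image)
qed

lemma tree_image:
  assumes t: "tree T" and inj: "inj_on f (verts T)"
  shows "tree (f ` verts T, (image f) ` edges T)"
proof -
  have g: "graph T" using tree_graph[OF t] .
  have gT: "graph (f ` verts T, (image f) ` edges T)"
    unfolding graph_def verts_pair edges_pair
  proof (intro conjI ballI)
    show "finite (f ` verts T)" using graph_finite[OF g] by blast
    fix e assume "e \<in> (image f) ` edges T"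
    then obtain e' where e': "e' \<in> edges T" "e = f ` e'" by blast
    then obtain x y where xy: "x \<noteq> y" "x \<in> verts T" "y \<in> verts T" "e' = {x, y}"
      using graph_edge[OF g] by blast
    have "f x \<noteq> f y" using inj xy unfolding inj_on_def by blast
    then show "\<exists>x y. x \<noteq> y \<and> x \<in> f ` verts T \<and> y \<in> f ` verts T \<and> e = {x, y}"
      using xy e' by auto
  qed
  have "inj_on (image f) (edges T)"
    using inj_on_image_Pow[OF inj] graph_edge_sub[OF g]
    by (meson PowI inj_on_subset subsetI)
  then have ce: "card ((image f) ` edges T) = card (edges T)" by (rule card_image)
  have cv: "card (f ` verts T) = card (verts T)" using inj by (rule card_image)
  have "connected_in (f ` verts T, (image f) ` edges T) (f ` verts T)"
    using connected_in_image[OF tree_conn[OF t]] .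
  then show ?thesis using tree_card[OF t] ce cv gT tree_ne[OF t]
    unfolding tree_def by simp
qed



lemma degree_sum:
  assumes g: "graph G"
  shows "(\<Sum>v\<in>verts G. card {e\<in>edges G. v \<in> e}) = 2 * card (edges G)"
proof -
  have fv: "finite (verts G)" using graph_finite[OF g] .
  have fe: "finite (edges G)" using graph_finite_edges[OF g] .
  have "(\<Sum>v\<in>verts G. card {e\<in>edges G. v \<in> e})
      = (\<Sum>v\<in>verts G. \<Sum>e\<in>edges G. if v \<in> e then 1 else 0)"
  proof (rule sum.cong)
    fix v
    have "card {e\<in>edges G. v \<in> e} = (\<Sum>e\<in>{e\<in>edges G. v \<in> e}. 1)" by simp
    also have "\<dots> = (\<Sum>e\<in>edges G. if v \<in> e then 1 else 0)"
      using fe by (rule sum.inter_filter)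
    finally show "card {e\<in>edges G. v \<in> e} = (\<Sum>e\<in>edges G. if v \<in> e then 1 else 0)" .
  qed simp
  also have "\<dots> = (\<Sum>e\<in>edges G. \<Sum>v\<in>verts G. if v \<in> e then 1 else 0)"
    by (rule sum.swap)
  also have "\<dots> = (\<Sum>e\<in>edges G. 2)"
  proof (rule sum.cong)
    fix e assume e: "e \<in> edges G"
    have "(\<Sum>v\<in>verts G. if v \<in> e then 1 else 0) = (\<Sum>v\<in>{v\<in>verts G. v \<in> e}. 1::nat)"
      using fv by (rule sum.inter_filter[symmetric])
    also have "\<dots> = card {v\<in>verts G. v \<in> e}" by simp
    also have "{v\<in>verts G. v \<in> e} = e" using graph_edge_sub[OF g e] by blast
    also have "card e = 2" using graph_edge_card[OF g e] .
    finally show "(\<Sum>v\<in>verts G. if v \<in> e then 1 else 0) = (2::nat)" .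
  qed simp
  finally show ?thesis by simp
qed

lemma tree_leaf:
  assumes t: "tree T" and c2: "2 \<le> card (verts T)"
  shows "\<exists>l p. l \<in> verts T \<and> p \<in> verts T \<and> l \<noteq> p \<and> {l, p} \<in> edges T \<and>
           (\<forall>u. {u, l} \<in> edges T \<longrightarrow> u = p)"
proof -
  have g: "graph T" using tree_graph[OF t] .
  have fv: "finite (verts T)" using graph_finite[OF g] .
  have fe: "finite (edges T)" using graph_finite_edges[OF g] .
  define deg where "deg v = card {e\<in>edges T. v \<in> e}" for v
  have pos: "deg v \<ge> 1" if v: "v \<in> verts T" for v
  proof -
    have "verts T - {v} \<noteq> {}"
    proof
      assume "verts T - {v} = {}"
      then have "verts T \<subseteq> {v}" by blast
      then have "card (verts T) \<le> 1" using card_mono[of "{v}"] by simp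
      then show False using c2 by simp
    qed
    then obtain u where u: "u \<in> verts T" "u \<noteq> v" by blast
    have "(R T (verts T))\<^sup>*\<^sup>* v u" using tree_conn[OF t] v u unfolding connected_in_def by blast
    then have "v \<noteq> u \<longrightarrow> (\<exists>b. {v, b} \<in> edges T)"
      by (induction rule: converse_rtranclp_induct) auto
    then obtain b where "{v, b} \<in> edges T" using u(2) by blast
    then have "{v, b} \<in> {e\<in>edges T. v \<in> e}" by simp
    moreover have "finite {e\<in>edges T. v \<in> e}" using fe by simp
    ultimately have "card {e\<in>edges T. v \<in> e} > 0" using card_gt_0_iff by blast
    then show ?thesis unfolding deg_def by simp
  qed
  have "\<exists>l\<in>verts T. deg l = 1"
  proof (rule ccontr)
    assume nt: "\<not> (\<exists>l\<in>verts T. deg l = 1)"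
    have "\<forall>v\<in>verts T. deg v \<ge> 2"
    proof
      fix v assume v: "v \<in> verts T"
      then have "deg v \<ge> 1" "deg v \<noteq> 1" using pos nt by auto
      then show "deg v \<ge> 2" by linarith
    qed
    then have "(\<Sum>v\<in>verts T. deg v) \<ge> (\<Sum>v\<in>verts T. 2)" by (meson sum_mono)
    moreover have "(\<Sum>v\<in>verts T. deg v) = 2 * card (edges T)"
      unfolding deg_def using degree_sum[OF g] .
    moreover have "card (edges T) = card (verts T) - 1" using tree_card[OF t] .
    ultimately show False using c2 by simp
  qed
  then obtain l where l: "l \<in> verts T" "card {e\<in>edges T. l \<in> e} = 1" unfolding deg_def by blast
  then obtain e0 where e0: "{e\<in>edges T. l \<in> e} = {e0}" by (meson card_1_singletonE)
  then have e0E: "e0 \<in> edges T" "l \<in> e0" by blast+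
  then obtain x y where xy: "x \<noteq> y" "x \<in> verts T" "y \<in> verts T" "e0 = {x, y}"
    using graph_edge[OF g] by blast
  define p where "p = (if x = l then y else x)"
  have e0p: "e0 = {l, p}" using xy e0E unfolding p_def by auto
  have pl: "p \<noteq> l" "p \<in> verts T" using xy e0E unfolding p_def by auto
  have uniq: "\<forall>u. {u, l} \<in> edges T \<longrightarrow> u = p"
  proof (intro allI impI)
    fix u assume "{u, l} \<in> edges T"
    then have "{u, l} \<in> {e\<in>edges T. l \<in> e}" by simp
    then have "{u, l} \<in> {e0}" unfolding e0 .
    then have "{u, l} = {l, p}" using e0p by simp
    then show "u = p" using pl by (metis doubleton_eq_iff)
  qed
  show ?thesis
    apply (rule exI[of _ l], rule exI[of _ p])
    using l(1) pl e0E(1) e0p uniq by blast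
qed

lemma R_avoid:
  assumes "(R G S)\<^sup>*\<^sup>* s t" "s \<noteq> l" "\<forall>u. {u, l} \<in> edges G \<longrightarrow> u = p" "p \<noteq> l"
    "edges G' = edges G - {{l, p}}"
  shows "(t \<noteq> l \<longrightarrow> (R G' (S - {l}))\<^sup>*\<^sup>* s t) \<and> (t = l \<longrightarrow> (R G' (S - {l}))\<^sup>*\<^sup>* s p)"
  using assms(1)
proof (induction rule: rtranclp_induct)
  case base
  then show ?case using assms(2) by simp
next
  case (step y z)
  have yz: "y \<in> S" "z \<in> S" "{y, z} \<in> edges G" using step(2) by auto
  show ?case
  proof (cases "z = l")
    case True
    then have "{y, l} \<in> edges G" using yz by simp
    then have "y = p" using assms(3) by simp
    then show ?thesis using step(3) True assms(4) by simp
  next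
    case False
    show ?thesis
    proof (cases "y = l")
      case True
      then have "{z, l} \<in> edges G" using yz by (simp add: insert_commute)
      then have "z = p" using assms(3) by simp
      then show ?thesis using step(3) True False by simp
    next
      case ynl: False
      have "l \<notin> {y, z}" using ynl False by simp
      then have "{y, z} \<noteq> {l, p}" by blast
      then have "R G' (S - {l}) y z" using yz ynl False assms(5) by simp
      moreover have "(R G' (S - {l}))\<^sup>*\<^sup>* s y" using step(3) ynl by simp
      ultimately have "(R G' (S - {l}))\<^sup>*\<^sup>* s z" by (simp add: rtranclp.rtrancl_into_rtrancl)
      then show ?thesis using False by simp
    qed
  qed
qed



lemma tree_remove_leaf:
  assumes t: "tree T" and l: "l \<in> verts T" and p: "p \<in> verts T" "l \<noteq> p" "{l, p} \<in> edges T"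
    and uniq: "\<forall>u. {u, l} \<in> edges T \<longrightarrow> u = p"
  shows "tree (verts T - {l}, edges T - {{l, p}})" (is "tree ?T")
proof -
  have g: "graph T" using tree_graph[OF t] .
  have fv: "finite (verts T)" using graph_finite[OF g] .
  have fe: "finite (edges T)" using graph_finite_edges[OF g] .
  have gT: "graph ?T"
    unfolding graph_def verts_pair edges_pair
  proof (intro conjI ballI)
    show "finite (verts T - {l})" using fv by simp
    fix e assume e: "e \<in> edges T - {{l, p}}"
    then obtain x y where xy: "x \<noteq> y" "x \<in> verts T" "y \<in> verts T" "e = {x, y}"
      using graph_edge[OF g] by blast
    have "x \<noteq> l"
    proof
      assume "x = l"
      then have "{y, l} \<in> edges T" using e xy by (simp add: insert_commute)
      then have "y = p" using uniq by simp
      then show False using e xy \<open>x = l\<close> by simp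
    qed
    moreover have "y \<noteq> l"
    proof
      assume "y = l"
      then have "{x, l} \<in> edges T" using e xy by simp
      then have "x = p" using uniq by simp
      then show False using e xy \<open>y = l\<close> by (simp add: insert_commute)
    qed
    ultimately show "\<exists>x y. x \<noteq> y \<and> x \<in> verts T - {l} \<and> y \<in> verts T - {l} \<and> e = {x, y}"
      using xy by blast
  qed
  have con: "connected_in ?T (verts ?T)"
    unfolding connected_in_def verts_pair
  proof (intro ballI)
    fix s t assume st: "s \<in> verts T - {l}" "t \<in> verts T - {l}"
    then have "(R T (verts T))\<^sup>*\<^sup>* s t" using tree_conn[OF t] unfolding connected_in_def by blast
    from R_avoid[where l=l and p=p and G'="?T", OF this] st uniq p(2)
    show "(R ?T (verts T - {l}))\<^sup>*\<^sup>* s t" by simp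
  qed
  have "card (edges ?T) = card (edges T) - 1" using p(3) fe by simp
  also have "\<dots> = card (verts T) - 2" using tree_card[OF t] by simp
  also have "\<dots> = card (verts ?T) - 1" using l fv by simp
  finally have "card (edges ?T) = card (verts ?T) - 1" .
  moreover have "verts ?T \<noteq> {}" using p by auto
  ultimately show ?thesis unfolding tree_def using gT con by simp
qed

lemma connected_in_singleton: "connected_in G {x}"
  unfolding connected_in_def by simp

lemma leaf_p_in:
  assumes c: "connected_in T X" and lX: "l \<in> X" and x: "x \<in> X" "x \<noteq> l"
    and p: "l \<noteq> p" and uniq: "\<forall>u. {u, l} \<in> edges T \<longrightarrow> u = p"
  shows "p \<in> X - {l}"
proof -
  have "(R T X)\<^sup>*\<^sup>* x l" using c lX x unfolding connected_in_def by blast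
  from R_avoid[where l=l and p=p and G'="(verts T - {l}, edges T - {{l, p}})", OF this] x uniq p
  have "(R (verts T - {l}, edges T - {{l, p}}) (X - {l}))\<^sup>*\<^sup>* x p" by auto
  then show ?thesis by (rule R_end) (use x in simp)
qed

definition shrink :: "'a \<Rightarrow> 'a \<Rightarrow> 'a set \<Rightarrow> 'a set" where
  "shrink l p X = (if X = {l} then {p} else X - {l})"

lemma shrink_conn:
  assumes c: "connected_in T X" and p: "l \<noteq> p" and uniq: "\<forall>u. {u, l} \<in> edges T \<longrightarrow> u = p"
  shows "connected_in (verts T - {l}, edges T - {{l, p}}) (shrink l p X)"
proof (cases "X = {l}")
  case True
  then show ?thesis unfolding shrink_def using connected_in_singleton by simp
next
  case False
  show ?thesis unfolding shrink_def using False unfolding connected_in_def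
  proof (simp only: if_False, intro ballI)
    fix s t assume st: "s \<in> X - {l}" "t \<in> X - {l}"
    then have "(R T X)\<^sup>*\<^sup>* s t" using c unfolding connected_in_def by blast
    from R_avoid[where l=l and p=p and G'="(verts T - {l}, edges T - {{l, p}})", OF this] st uniq p
    show "(R (verts T - {l}, edges T - {{l, p}}) (X - {l}))\<^sup>*\<^sup>* s t" by simp
  qed
qed

lemma shrink_sub:
  assumes "X \<subseteq> V" "p \<in> V" "l \<noteq> p"
  shows "shrink l p X \<subseteq> V - {l}"
  using assms unfolding shrink_def by auto

lemma shrink_int:
  assumes cX: "connected_in T X" and cY: "connected_in T Y" and XY: "X \<inter> Y \<noteq> {}"
    and p: "l \<noteq> p" and uniq: "\<forall>u. {u, l} \<in> edges T \<longrightarrow> u = p"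
  shows "shrink l p X \<inter> shrink l p Y \<noteq> {}"
proof -
  have pX: "p \<in> shrink l p X" if lX: "l \<in> X" and cX: "connected_in T X" for X
  proof (cases "X = {l}")
    case True then show ?thesis unfolding shrink_def by simp
  next
    case False
    then obtain x where "x \<in> X" "x \<noteq> l" using lX by blast
    then have "p \<in> X - {l}" using leaf_p_in[OF cX lX _ _ p uniq] by blast
    then show ?thesis unfolding shrink_def using False by simp
  qed
  have sX: "shrink l p X \<supseteq> X - {l}" for X unfolding shrink_def by auto
  obtain z where z: "z \<in> X" "z \<in> Y" using XY by blast
  show ?thesis
  proof (cases "z = l")
    case True
    then show ?thesis using pX[OF _ cX] pX[OF _ cY] z by blast
  next
    case False
    then show ?thesis using sX[of X] sX[of Y] z by blast
  qed
qed



lemma helly3: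
  assumes "tree T" "A \<subseteq> verts T" "B \<subseteq> verts T" "C \<subseteq> verts T"
    "connected_in T A" "connected_in T B" "connected_in T C"
    "A \<inter> B \<noteq> {}" "A \<inter> C \<noteq> {}" "B \<inter> C \<noteq> {}"
  shows "A \<inter> B \<inter> C \<noteq> {}"
  using assms
proof (induction "card (verts T)" arbitrary: T A B C rule: less_induct)
  case less
  have g: "graph T" using tree_graph[OF less.prems(1)] .
  have fv: "finite (verts T)" using graph_finite[OF g] .
  have ne: "verts T \<noteq> {}" using tree_ne[OF less.prems(1)] .
  show ?case
  proof (cases "card (verts T) < 2")
    case True
    moreover have "card (verts T) > 0" using fv ne by auto
    ultimately have "card (verts T) = 1" by simp
    then obtain c where c: "verts T = {c}" by (meson card_1_singletonE)
    have "A \<noteq> {}" "B \<noteq> {}" "C \<noteq> {}" using less.prems(8-10) by auto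
    moreover have "A \<subseteq> {c}" "B \<subseteq> {c}" "C \<subseteq> {c}" using less.prems(2-4) c by auto
    ultimately have "c \<in> A" "c \<in> B" "c \<in> C" by auto
    then show ?thesis by blast
  next
    case False
    then have "2 \<le> card (verts T)" by simp
    then obtain l p where lp: "l \<in> verts T" "p \<in> verts T" "l \<noteq> p" "{l, p} \<in> edges T"
      "\<forall>u. {u, l} \<in> edges T \<longrightarrow> u = p"
      using tree_leaf[OF less.prems(1)] by blast
    define T' where "T' = (verts T - {l}, edges T - {{l, p}})"
    have tT': "tree T'" unfolding T'_def using tree_remove_leaf[OF less.prems(1) lp] .
    have "card (verts T) > 0" using fv lp(1) by (auto simp: card_gt_0_iff)
    then have cT': "card (verts T') < card (verts T)" unfolding T'_def using fv lp(1)
      by simp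
    have sub: "shrink l p X \<subseteq> verts T'" if "X \<subseteq> verts T" for X
      unfolding T'_def verts_pair using shrink_sub[OF that lp(2,3)] .
    have con: "connected_in T' (shrink l p X)" if "connected_in T X" for X
      unfolding T'_def using shrink_conn[OF that lp(3,5)] .
    have int: "shrink l p X \<inter> shrink l p Y \<noteq> {}"
      if "connected_in T X" "connected_in T Y" "X \<inter> Y \<noteq> {}" for X Y
      using shrink_int[OF that lp(3,5)] .
    have "shrink l p A \<inter> shrink l p B \<inter> shrink l p C \<noteq> {}"
      using less.hyps[OF cT' tT' sub[OF less.prems(2)] sub[OF less.prems(3)] sub[OF less.prems(4)]
          con[OF less.prems(5)] con[OF less.prems(6)] con[OF less.prems(7)]
          int[OF less.prems(5,6,8)] int[OF less.prems(5,7,9)] int[OF less.prems(6,7,10)]] .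
    then obtain c where c: "c \<in> shrink l p A" "c \<in> shrink l p B" "c \<in> shrink l p C" by blast
    show ?thesis
    proof (cases "A = {l} \<or> B = {l} \<or> C = {l}")
      case True
      then have "l \<in> A \<and> l \<in> B \<and> l \<in> C" using less.prems(8-10) by (elim disjE) auto
      then show ?thesis by blast
    next
      case False
      then have "c \<in> A" "c \<in> B" "c \<in> C" using c by (auto simp: shrink_def)
      then show ?thesis by blast
    qed
  qed
qed



lemma td_trivial:
  assumes "finite (verts G)" "\<forall>e\<in>edges G. e \<subseteq> verts G"
  shows "tree_decomposition G ({0::nat}, {}) (\<lambda>_. verts G)"
proof -
  have "tree ({0::nat}, {})"
    unfolding tree_def graph_def connected_in_def by simp
  then show ?thesis using assms unfolding tree_decomposition_def connected_in_def by auto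
qed

lemma td_mono_edges:
  assumes "tree_decomposition H T b" "verts H' = verts H" "edges H' \<subseteq> edges H"
  shows "tree_decomposition H' T b"
  using assms unfolding tree_decomposition_def by blast

lemma td_map:
  assumes td: "tree_decomposition H T b" and inj: "inj_on f (verts H)"
  shows "tree_decomposition (f ` verts H, (image f) ` edges H) T (\<lambda>t. f ` b t)"
proof -
  have t: "tree T" and bs: "\<forall>t\<in>verts T. b t \<subseteq> verts H"
    and cov: "\<forall>v\<in>verts H. \<exists>t\<in>verts T. v \<in> b t"
    and ecov: "\<forall>e\<in>edges H. \<exists>t\<in>verts T. e \<subseteq> b t"
    and con: "\<forall>v\<in>verts H. connected_in T {t\<in>verts T. v \<in> b t}"
    using td unfolding tree_decomposition_def by blast+
  have eq: "{t\<in>verts T. f v \<in> f ` b t} = {t\<in>verts T. v \<in> b t}" if v: "v \<in> verts H" for v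
  proof (intro set_eqI iffI)
    fix t assume "t \<in> {t\<in>verts T. f v \<in> f ` b t}"
    then have t': "t \<in> verts T" "f v \<in> f ` b t" by auto
    then obtain u where "u \<in> b t" "f v = f u" by blast
    moreover have "u \<in> verts H" using bs t' \<open>u \<in> b t\<close> by blast
    ultimately have "u = v" using inj v unfolding inj_on_def by metis
    then show "t \<in> {t\<in>verts T. v \<in> b t}" using t' \<open>u \<in> b t\<close> by simp
  qed auto
  show ?thesis
    unfolding tree_decomposition_def verts_pair edges_pair
  proof (intro conjI ballI)
    show "tree T" using t .
  next
    fix t assume "t \<in> verts T" then show "f ` b t \<subseteq> f ` verts H" using bs by (simp add: image_mono)
  next
    fix v' assume "v' \<in> f ` verts H"
    then obtain v where v: "v \<in> verts H" "v' = f v" by blast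
    then obtain t where "t \<in> verts T" "v \<in> b t" using cov by blast
    then show "\<exists>t\<in>verts T. v' \<in> f ` b t" using v(2) by blast
  next
    fix e' assume "e' \<in> (image f) ` edges H"
    then obtain e where e: "e \<in> edges H" "e' = f ` e" by blast
    then obtain t where "t \<in> verts T" "e \<subseteq> b t" using ecov by blast
    then show "\<exists>t\<in>verts T. e' \<subseteq> f ` b t" using e(2) by (meson image_mono)
  next
    fix v' assume "v' \<in> f ` verts H"
    then obtain v where v: "v \<in> verts H" "v' = f v" by blast
    show "connected_in T {t\<in>verts T. v' \<in> f ` b t}"
      unfolding v(2) eq[OF v(1)] using bspec[OF con v(1)] .
  qed
qed

lemma td_tree_map:
  assumes td: "tree_decomposition H T b" and inj: "inj_on g (verts T)"
    and hg: "\<forall>t\<in>verts T. h (g t) = t"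
  shows "tree_decomposition H (g ` verts T, (image g) ` edges T) (\<lambda>t. b (h t))"
proof -
  have t: "tree T" and bs: "\<forall>t\<in>verts T. b t \<subseteq> verts H"
    and cov: "\<forall>v\<in>verts H. \<exists>t\<in>verts T. v \<in> b t"
    and ecov: "\<forall>e\<in>edges H. \<exists>t\<in>verts T. e \<subseteq> b t"
    and con: "\<forall>v\<in>verts H. connected_in T {t\<in>verts T. v \<in> b t}"
    using td unfolding tree_decomposition_def by blast+
  have eq: "{t\<in>g ` verts T. v \<in> b (h t)} = g ` {t\<in>verts T. v \<in> b t}" for v
  proof (intro set_eqI iffI)
    fix t' assume "t' \<in> {t\<in>g ` verts T. v \<in> b (h t)}"
    then obtain t where "t \<in> verts T" "t' = g t" "v \<in> b (h t')" by blast
    then show "t' \<in> g ` {t\<in>verts T. v \<in> b t}" using hg by simp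
  next
    fix t' assume "t' \<in> g ` {t\<in>verts T. v \<in> b t}"
    then obtain t where "t \<in> verts T" "t' = g t" "v \<in> b t" by blast
    then show "t' \<in> {t\<in>g ` verts T. v \<in> b (h t)}" using hg by simp
  qed
  show ?thesis
    unfolding tree_decomposition_def verts_pair edges_pair
  proof (intro conjI ballI)
    show "tree (g ` verts T, (image g) ` edges T)" using tree_image[OF t inj] .
  next
    fix t' assume "t' \<in> g ` verts T"
    then obtain t where "t \<in> verts T" "t' = g t" by blast
    then show "b (h t') \<subseteq> verts H" using bs hg by simp
  next
    fix v assume "v \<in> verts H"
    then obtain t where "t \<in> verts T" "v \<in> b t" using cov by blast
    moreover have "g t \<in> g ` verts T" "h (g t) = t" using \<open>t \<in> verts T\<close> hg by auto
    ultimately show "\<exists>t\<in>g ` verts T. v \<in> b (h t)" by metis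
  next
    fix e assume "e \<in> edges H"
    then obtain t where "t \<in> verts T" "e \<subseteq> b t" using ecov by blast
    moreover have "g t \<in> g ` verts T" "h (g t) = t" using \<open>t \<in> verts T\<close> hg by auto
    ultimately show "\<exists>t\<in>g ` verts T. e \<subseteq> b (h t)" by metis
  next
    fix v assume "v \<in> verts H"
    then have "connected_in T {t\<in>verts T. v \<in> b t}" using bspec[OF con] by blast
    from connected_in_image[OF this, of g]
    show "connected_in (g ` verts T, (image g) ` edges T) {t\<in>g ` verts T. v \<in> b (h t)}"
      unfolding eq .
  qed
qed

lemma td_glue:
  assumes td1: "tree_decomposition H1 T1 b1" and td2: "tree_decomposition H2 T2 b2"
    and disj: "verts T1 \<inter> verts T2 = {}" and a: "a \<in> verts T1" and b: "b \<in> verts T2"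
    and sep: "verts H1 \<inter> verts H2 \<subseteq> b1 a \<inter> b2 b"
  shows "tree_decomposition (verts H1 \<union> verts H2, edges H1 \<union> edges H2)
     (verts T1 \<union> verts T2, edges T1 \<union> edges T2 \<union> {{a, b}})
     (\<lambda>t. if t \<in> verts T1 then b1 t else b2 t)"
proof -
  have t1: "tree T1" and bs1: "\<forall>t\<in>verts T1. b1 t \<subseteq> verts H1"
    and cov1: "\<forall>v\<in>verts H1. \<exists>t\<in>verts T1. v \<in> b1 t"
    and ecov1: "\<forall>e\<in>edges H1. \<exists>t\<in>verts T1. e \<subseteq> b1 t"
    and con1: "\<forall>v\<in>verts H1. connected_in T1 {t\<in>verts T1. v \<in> b1 t}"
    using td1 unfolding tree_decomposition_def by blast+
  have t2: "tree T2" and bs2: "\<forall>t\<in>verts T2. b2 t \<subseteq> verts H2"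
    and cov2: "\<forall>v\<in>verts H2. \<exists>t\<in>verts T2. v \<in> b2 t"
    and ecov2: "\<forall>e\<in>edges H2. \<exists>t\<in>verts T2. e \<subseteq> b2 t"
    and con2: "\<forall>v\<in>verts H2. connected_in T2 {t\<in>verts T2. v \<in> b2 t}"
    using td2 unfolding tree_decomposition_def by blast+
  define T where "T = (verts T1 \<union> verts T2, edges T1 \<union> edges T2 \<union> {{a, b}})"
  define bb where "bb = (\<lambda>t. if t \<in> verts T1 then b1 t else b2 t)"
  have b2eq: "bb t = b2 t" if "t \<in> verts T2" for t
    using that disj unfolding bb_def by auto
  have b1eq: "bb t = b1 t" if "t \<in> verts T1" for t
    using that unfolding bb_def by auto
  have setsplit: "{t\<in>verts T. v \<in> bb t} = {t\<in>verts T1. v \<in> b1 t} \<union> {t\<in>verts T2. v \<in> b2 t}" for v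
    unfolding T_def verts_pair using b1eq b2eq by auto
  have "tree_decomposition (verts H1 \<union> verts H2, edges H1 \<union> edges H2) T bb"
    unfolding tree_decomposition_def verts_pair edges_pair
  proof (intro conjI ballI)
    show "tree T" unfolding T_def using tree_glue[OF t1 t2 disj a b] .
  next
    fix t assume "t \<in> verts T"
    then consider "t \<in> verts T1" | "t \<in> verts T2" unfolding T_def by auto
    then show "bb t \<subseteq> verts H1 \<union> verts H2"
    proof cases
      case 1 then show ?thesis using b1eq bs1 by auto
    next
      case 2 then show ?thesis using b2eq bs2 by auto
    qed
  next
    fix v assume "v \<in> verts H1 \<union> verts H2"
    then consider "v \<in> verts H1" | "v \<in> verts H2" by blast
    then show "\<exists>t\<in>verts T. v \<in> bb t"
    proof cases
      case 1
      then obtain t where t: "t \<in> verts T1" "v \<in> b1 t" using cov1 by blast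
      then have "t \<in> verts T" "v \<in> bb t" using b1eq unfolding T_def by auto
      then show ?thesis by blast
    next
      case 2
      then obtain t where t: "t \<in> verts T2" "v \<in> b2 t" using cov2 by blast
      then have "t \<in> verts T" "v \<in> bb t" using b2eq unfolding T_def by auto
      then show ?thesis by blast
    qed
  next
    fix e assume "e \<in> edges H1 \<union> edges H2"
    then consider "e \<in> edges H1" | "e \<in> edges H2" by blast
    then show "\<exists>t\<in>verts T. e \<subseteq> bb t"
    proof cases
      case 1
      then obtain t where t: "t \<in> verts T1" "e \<subseteq> b1 t" using ecov1 by blast
      then have "t \<in> verts T" "e \<subseteq> bb t" using b1eq unfolding T_def by auto
      then show ?thesis by blast
    next
      case 2
      then obtain t where t: "t \<in> verts T2" "e \<subseteq> b2 t" using ecov2 by blast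
      then have "t \<in> verts T" "e \<subseteq> bb t" using b2eq unfolding T_def by auto
      then show ?thesis by blast
    qed
  next
    fix v assume v: "v \<in> verts H1 \<union> verts H2"
    have e1: "edges T1 \<subseteq> edges T" "edges T2 \<subseteq> edges T" "{a, b} \<in> edges T"
      unfolding T_def by auto
    show "connected_in T {t\<in>verts T. v \<in> bb t}"
      unfolding setsplit
    proof (cases "v \<in> verts H1 \<and> v \<in> verts H2")
      case True
      then have "a \<in> {t\<in>verts T1. v \<in> b1 t}" "b \<in> {t\<in>verts T2. v \<in> b2 t}"
        using sep a b by auto
      moreover have "connected_in T1 {t\<in>verts T1. v \<in> b1 t}" using bspec[OF con1] True by blast
      moreover have "connected_in T2 {t\<in>verts T2. v \<in> b2 t}" using bspec[OF con2] True by blast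
      ultimately show "connected_in T ({t\<in>verts T1. v \<in> b1 t} \<union> {t\<in>verts T2. v \<in> b2 t})"
        using connected_in_join[OF _ _ _ _ e1] by blast
    next
      case False
      then show "connected_in T ({t\<in>verts T1. v \<in> b1 t} \<union> {t\<in>verts T2. v \<in> b2 t})"
      proof (cases "v \<in> verts H1")
        case True
        then have emp: "{t\<in>verts T2. v \<in> b2 t} = {}" using False bs2 by auto
        have "connected_in T1 {t\<in>verts T1. v \<in> b1 t}" using bspec[OF con1] True by blast
        then have "connected_in T {t\<in>verts T1. v \<in> b1 t}" by (rule connected_in_mono[OF _ e1(1)])
        then show ?thesis unfolding emp by simp
      next
        case f: False
        then have "v \<in> verts H2" using v by blast
        have emp: "{t\<in>verts T1. v \<in> b1 t} = {}" using f bs1 by auto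
        have "connected_in T2 {t\<in>verts T2. v \<in> b2 t}" using bspec[OF con2] \<open>v \<in> verts H2\<close> by blast
        then have "connected_in T {t\<in>verts T2. v \<in> b2 t}" by (rule connected_in_mono[OF _ e1(2)])
        then show ?thesis unfolding emp by simp
      qed
    qed
  qed
  then show ?thesis unfolding T_def bb_def .
qed



lemma td_parts:
  assumes "tree_decomposition H T b"
  shows "tree T" "\<forall>t\<in>verts T. b t \<subseteq> verts H"
    "\<forall>v\<in>verts H. \<exists>t\<in>verts T. v \<in> b t"
    "\<forall>e\<in>edges H. \<exists>t\<in>verts T. e \<subseteq> b t"
    "\<forall>v\<in>verts H. connected_in T {t\<in>verts T. v \<in> b t}"
  using assms unfolding tree_decomposition_def by blast+

lemma td_glue_ex:
  assumes td1: "tree_decomposition H1 T1 b1" and td2: "tree_decomposition H2 (T2::nat graph) b2"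
    and a: "a \<in> verts T1" and b: "b \<in> verts T2"
    and sep: "verts H1 \<inter> verts H2 \<subseteq> b1 a \<inter> b2 b"
    and k1: "\<forall>t\<in>verts T1. card (b1 t) \<le> K" and k2: "\<forall>t\<in>verts T2. card (b2 t) \<le> K"
  shows "\<exists>T bb. tree_decomposition (verts H1 \<union> verts H2, edges H1 \<union> edges H2) T bb \<and>
     (\<forall>t\<in>verts T. card (bb t) \<le> K)"
proof -
  have t1: "tree T1" using td_parts(1)[OF td1] .
  have fv1: "finite (verts T1)" using graph_finite[OF tree_graph[OF t1]] .
  define N where "N = Suc (Max (verts T1))"
  define g where "g = (\<lambda>t::nat. t + N)"
  define h where "h = (\<lambda>t::nat. t - N)"
  have inj: "inj_on g (verts T2)" unfolding g_def inj_on_def by simp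
  have hg: "\<forall>t\<in>verts T2. h (g t) = t" unfolding g_def h_def by simp
  have td2': "tree_decomposition H2 (g ` verts T2, (image g) ` edges T2) (\<lambda>t. b2 (h t))"
    using td_tree_map[OF td2 inj hg] .
  have disj: "verts T1 \<inter> verts (g ` verts T2, (image g) ` edges T2) = {}"
  proof -
    have "x < N" if "x \<in> verts T1" for x
      using Max_ge[OF fv1 that] unfolding N_def by simp
    then show ?thesis unfolding g_def by auto
  qed
  have gb: "g b \<in> verts (g ` verts T2, (image g) ` edges T2)" using b by simp
  have sep': "verts H1 \<inter> verts H2 \<subseteq> b1 a \<inter> b2 (h (g b))" using sep hg b by simp
  from td_glue[OF td1 td2' disj a gb sep']
  have td: "tree_decomposition (verts H1 \<union> verts H2, edges H1 \<union> edges H2)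
     (verts T1 \<union> g ` verts T2, edges T1 \<union> (image g) ` edges T2 \<union> {{a, g b}})
     (\<lambda>t. if t \<in> verts T1 then b1 t else b2 (h t))" by simp
  have "\<forall>t\<in>verts (verts T1 \<union> g ` verts T2, edges T1 \<union> (image g) ` edges T2 \<union> {{a, g b}}).
      card (if t \<in> verts T1 then b1 t else b2 (h t)) \<le> K"
    using k1 k2 hg by auto
  then show ?thesis using td by blast
qed



lemma line_verts[simp]: "verts (line_graph F) = edges F"
  unfolding line_graph_def by simp

lemma line_edges: "edges (line_graph F) = {{e, f} | e f. e \<in> edges F \<and> f \<in> edges F \<and> e \<noteq> f \<and> e \<inter> f \<noteq> {}}"
  unfolding line_graph_def by simp

lemma L_to_G0:
  assumes g: "graph G" and td: "tree_decomposition (line_graph G) T b"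
    and k: "\<forall>t\<in>verts T. card (b t) \<le> k"
  shows "tree_decomposition (\<Union>(edges G), edges G) T (\<lambda>t. \<Union>(b t)) \<and>
    (\<forall>t\<in>verts T. card (\<Union>(b t)) \<le> 2 * k)"
proof -
  note tp = td_parts[OF td]
  have bs: "\<forall>t\<in>verts T. b t \<subseteq> edges G" using tp(2) by simp
  have cov: "\<forall>e\<in>edges G. \<exists>t\<in>verts T. e \<in> b t" using tp(3) by simp
  have con: "\<forall>e\<in>edges G. connected_in T {t\<in>verts T. e \<in> b t}" using tp(5) by simp
  have adj: "\<exists>t\<in>verts T. e \<in> b t \<and> f \<in> b t"
    if "e \<in> edges G" "f \<in> edges G" "e \<inter> f \<noteq> {}" for e f
  proof (cases "e = f")
    case True then show ?thesis using cov that by blast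
  next
    case False
    then have "{e, f} \<in> edges (line_graph G)" unfolding line_edges using that by blast
    then obtain t where "t \<in> verts T" "{e, f} \<subseteq> b t" using tp(4) by blast
    then show ?thesis by blast
  qed
  have fe: "finite (edges G)" using graph_finite_edges[OF g] .
  have "tree_decomposition (\<Union>(edges G), edges G) T (\<lambda>t. \<Union>(b t))"
    unfolding tree_decomposition_def verts_pair edges_pair
  proof (intro conjI ballI)
    show "tree T" using tp(1) .
  next
    fix t assume "t \<in> verts T" then show "\<Union>(b t) \<subseteq> \<Union>(edges G)" using bs by blast
  next
    fix v assume "v \<in> \<Union>(edges G)"
    then obtain e where e: "e \<in> edges G" "v \<in> e" by blast
    then obtain t where "t \<in> verts T" "e \<in> b t" using cov by blast
    then show "\<exists>t\<in>verts T. v \<in> \<Union>(b t)" using e by blast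
  next
    fix e assume "e \<in> edges G"
    then obtain t where "t \<in> verts T" "e \<in> b t" using cov by blast
    then show "\<exists>t\<in>verts T. e \<subseteq> \<Union>(b t)" by blast
  next
    fix v assume "v \<in> \<Union>(edges G)"
    define F where "F = (\<lambda>e. {t\<in>verts T. e \<in> b t}) ` {e\<in>edges G. v \<in> e}"
    have eq: "{t\<in>verts T. v \<in> \<Union>(b t)} = \<Union>F"
      unfolding F_def using bs by blast
    have "connected_in T (\<Union>F)"
    proof (rule connected_in_Union)
      show "\<forall>A\<in>F. connected_in T A" unfolding F_def using con by blast
      show "\<forall>A\<in>F. \<forall>B\<in>F. A \<inter> B \<noteq> {}"
      proof (intro ballI)
        fix A B assume "A \<in> F" "B \<in> F"
        then obtain e f where ef: "e \<in> edges G" "v \<in> e" "f \<in> edges G" "v \<in> f"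
          "A = {t\<in>verts T. e \<in> b t}" "B = {t\<in>verts T. f \<in> b t}"
          unfolding F_def by blast
        then obtain t where "t \<in> verts T" "e \<in> b t" "f \<in> b t" using adj[of e f] by blast
        then show "A \<inter> B \<noteq> {}" using ef by blast
      qed
    qed
    then show "connected_in T {t\<in>verts T. v \<in> \<Union>(b t)}" unfolding eq .
  qed
  moreover have "card (\<Union>(b t)) \<le> 2 * k" if t: "t \<in> verts T" for t
  proof -
    have fb: "finite (b t)" using bs t fe finite_subset by blast
    have "card (\<Union>(b t)) \<le> (\<Sum>e\<in>b t. card e)" by (rule card_Union_le_sum_card)
    also have "\<dots> = (\<Sum>e\<in>b t. 2)"
      using graph_edge_card[OF g] bs t by (intro sum.cong) auto
    also have "\<dots> = 2 * card (b t)" by simp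
    also have "\<dots> \<le> 2 * k" using k t by simp
    finally show ?thesis .
  qed
  ultimately show ?thesis by blast
qed

lemma L_to_G:
  assumes g: "graph G" and td: "tree_decomposition (line_graph G) T b"
    and k: "\<forall>t\<in>verts T. card (b t) \<le> k" and k1: "1 \<le> k"
  shows "\<exists>T' b'. tree_decomposition G T' b' \<and> (\<forall>t\<in>verts T'. card (b' t) \<le> 2 * k)"
proof -
  define I where "I = verts G - \<Union>(edges G)"
  have fI: "finite I" unfolding I_def using graph_finite[OF g] by simp
  have "finite J \<Longrightarrow> J \<subseteq> I \<Longrightarrow> \<exists>T' b'. tree_decomposition (\<Union>(edges G) \<union> J, edges G) (T'::nat graph) b' \<and>
      (\<forall>t\<in>verts T'. card (b' t) \<le> 2 * k)" for J
  proof (induction J rule: finite_induct)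
    case empty
    show ?case using L_to_G0[OF g td k] by (metis Un_empty_right)
  next
    case (insert v J)
    then obtain T' b' where td': "tree_decomposition (\<Union>(edges G) \<union> J, edges G) T' b'"
      and k': "\<forall>t\<in>verts T'. card (b' t) \<le> 2 * k" by auto
    have tdv: "tree_decomposition ({v}, {}) ({0::nat}, {}) (\<lambda>_. verts ({v}, {}))"
      by (rule td_trivial) auto
    have vI: "v \<in> I" using insert by auto
    have a: "\<exists>a. a \<in> verts T'" using tree_ne[OF td_parts(1)[OF td']] by blast
    then obtain a where a: "a \<in> verts T'" by blast
    have sep: "verts (\<Union>(edges G) \<union> J, edges G) \<inter> verts ({v}, {}) \<subseteq> b' a \<inter> verts ({v}, {})"
      using vI insert(2) unfolding I_def by auto
    have kv: "\<forall>t\<in>verts ({0::nat}, {}). card (verts ({v}, {})) \<le> 2 * k" using k1 by simp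
    from td_glue_ex[OF td' tdv a _ sep k' kv]
    obtain T'' b'' where "tree_decomposition (\<Union>(edges G) \<union> J \<union> {v}, edges G \<union> {}) T'' b''"
      "\<forall>t\<in>verts T''. card (b'' t) \<le> 2 * k" by auto
    then show ?case by (intro exI[of _ T''] exI[of _ b'']) (simp add: insert_commute)
  qed
  from this[OF fI order_refl]
  obtain T' b' where td': "tree_decomposition (\<Union>(edges G) \<union> I, edges G) (T'::nat graph) b'"
      and k': "\<forall>t\<in>verts T'. card (b' t) \<le> 2 * k" by blast
  have "\<Union>(edges G) \<union> I = verts G" unfolding I_def using graph_edge_sub[OF g] by blast
  moreover have "(verts G, edges G) = G" by (simp add: verts_def edges_def)
  ultimately have "tree_decomposition G T' b'" using td' by simp
  then show ?thesis using k' by blast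
qed



lemma card3_distinct: "card {x, y, z} = 3 \<Longrightarrow> x \<noteq> y \<and> x \<noteq> z \<and> y \<noteq> z"
  by (cases "x = y"; cases "x = z"; cases "y = z") (auto simp: card_insert_if)

lemma nbhd_edge: "u \<in> nbhd G v \<longleftrightarrow> {u, v} \<in> edges G"
  unfolding nbhd_def by simp

lemma side:
  assumes g: "graph G" and v: "v \<in> verts G" and nb: "nbhd G v = {x, y, z}" and c3: "card {x, y, z} = 3"
    and c3': "card {x', y', z'} = 3" and out: "{x', y', z'} \<inter> verts G = {}"
    and td: "tree_decomposition (line_graph G) T b"
  shows "\<exists>\<phi>. inj_on \<phi> (edges G) \<and>
     \<phi> ` edges G = {e\<in>edges G. v \<notin> e} \<union> {{x, x'}, {y, y'}, {z, z'}} \<and>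
     (\<forall>e\<in>\<phi> ` edges G. \<forall>f\<in>\<phi> ` edges G. e \<noteq> f \<and> e \<inter> f \<noteq> {} \<longrightarrow>
        {e, f} \<in> (image \<phi>) ` edges (line_graph G)) \<and>
     (\<exists>t\<in>verts T. {{x, x'}, {y, y'}, {z, z'}} \<subseteq> \<phi> ` b t)"
proof -
  have d: "x \<noteq> y" "x \<noteq> z" "y \<noteq> z" using card3_distinct[OF c3] by auto
  have d': "x' \<noteq> y'" "x' \<noteq> z'" "y' \<noteq> z'" using card3_distinct[OF c3'] by auto
  have o': "x' \<notin> verts G" "y' \<notin> verts G" "z' \<notin> verts G" using out by auto
  define ex where "ex = {v, x}"
  define ey where "ey = {v, y}"
  define ez where "ez = {v, z}"
  define nx where "nx = {x, x'}"
  define ny where "ny = {y, y'}"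
  define nz where "nz = {z, z'}"
  have exE: "ex \<in> edges G" "ey \<in> edges G" "ez \<in> edges G"
    using nb unfolding ex_def ey_def ez_def nbhd_def by (auto simp: insert_commute)
  have xV: "x \<in> verts G" "y \<in> verts G" "z \<in> verts G"
    using graph_edge_sub[OF g exE(1)] graph_edge_sub[OF g exE(2)] graph_edge_sub[OF g exE(3)]
    unfolding ex_def ey_def ez_def by auto
  have xv: "x \<noteq> v" "y \<noteq> v" "z \<noteq> v"
    using graph_edge_card[OF g exE(1)] graph_edge_card[OF g exE(2)] graph_edge_card[OF g exE(3)]
    unfolding ex_def ey_def ez_def by auto
  have vE: "e \<in> {ex, ey, ez}" if e: "e \<in> edges G" "v \<in> e" for e
  proof -
    obtain a c where ac: "a \<noteq> c" "e = {a, c}" using graph_edge[OF g e(1)] by blast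
    then have "\<exists>u. e = {v, u}" using e(2) by (auto simp: insert_commute)
    then obtain u where u: "e = {v, u}" by blast
    then have "{u, v} \<in> edges G" using e(1) by (simp add: insert_commute)
    then have "u \<in> {x, y, z}" using nb nbhd_edge by metis
    then show ?thesis unfolding u ex_def ey_def ez_def by auto
  qed
  have sp_d: "ex \<noteq> ey" "ex \<noteq> ez" "ey \<noteq> ez" unfolding ex_def ey_def ez_def
    using d xv by (auto simp: doubleton_eq_iff)
  have n_d: "nx \<noteq> ny" "nx \<noteq> nz" "ny \<noteq> nz" unfolding nx_def ny_def nz_def
    using d xV o' by (auto simp: doubleton_eq_iff)
  have nNE: "nx \<notin> edges G" "ny \<notin> edges G" "nz \<notin> edges G"
    using graph_edge_sub[OF g] o' unfolding nx_def ny_def nz_def by blast+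
  define N where "N = {nx, ny, nz}"
  have NE: "N \<inter> edges G = {}" unfolding N_def using nNE by auto
  have Ndisj: "n1 \<inter> n2 = {}" if "n1 \<in> N" "n2 \<in> N" "n1 \<noteq> n2" for n1 n2
    using that d d' o' xV unfolding N_def nx_def ny_def nz_def by auto
  have NV: "n \<inter> verts G \<subseteq> m" if "n = nx \<and> m = ex \<or> n = ny \<and> m = ey \<or> n = nz \<and> m = ez" for n m
    using that o' unfolding nx_def ny_def nz_def ex_def ey_def ez_def by auto
  define \<phi> where "\<phi> e = (if e = ex then nx else if e = ey then ny else if e = ez then nz else e)" for e
  have phi_sp: "\<phi> ex = nx" "\<phi> ey = ny" "\<phi> ez = nz" unfolding \<phi>_def using sp_d by auto
  have phi_o: "\<phi> e = e" if "e \<notin> {ex, ey, ez}" for e using that unfolding \<phi>_def by auto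
  have phiN: "\<phi> e \<in> N \<longleftrightarrow> e \<in> {ex, ey, ez}" if "e \<in> edges G" for e
  proof
    assume "\<phi> e \<in> N"
    then show "e \<in> {ex, ey, ez}" using phi_o[of e] that NE by (cases "e \<in> {ex, ey, ez}") auto
  qed (use phi_sp N_def in auto)
  have inj: "inj_on \<phi> (edges G)"
  proof (rule inj_onI)
    fix e f assume ef: "e \<in> edges G" "f \<in> edges G" "\<phi> e = \<phi> f"
    show "e = f"
    proof (cases "e \<in> {ex, ey, ez}")
      case True
      then have "f \<in> {ex, ey, ez}" using phiN[OF ef(1)] phiN[OF ef(2)] ef(3) by simp
      then show ?thesis using True ef(3) phi_sp n_d by auto
    next
      case False
      then have "f \<notin> {ex, ey, ez}" using phiN[OF ef(1)] phiN[OF ef(2)] ef(3) by simp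
      then show ?thesis using False ef(3) phi_o by simp
    qed
  qed
  have img: "\<phi> ` edges G = {e\<in>edges G. v \<notin> e} \<union> N"
  proof (intro set_eqI iffI)
    fix e' assume "e' \<in> \<phi> ` edges G"
    then obtain e where e: "e \<in> edges G" "e' = \<phi> e" by blast
    show "e' \<in> {e\<in>edges G. v \<notin> e} \<union> N"
    proof (cases "v \<in> e")
      case True
      then have "e \<in> {ex, ey, ez}" using vE e(1) by blast
      then show ?thesis using e phiN by blast
    next
      case False
      then have "e \<notin> {ex, ey, ez}" unfolding ex_def ey_def ez_def by auto
      then show ?thesis using e phi_o False by simp
    qed
  next
    fix e' assume "e' \<in> {e\<in>edges G. v \<notin> e} \<union> N"
    then consider "e' \<in> edges G" "v \<notin> e'" | "e' \<in> N" by blast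
    then show "e' \<in> \<phi> ` edges G"
    proof cases
      case 1
      then have "e' \<notin> {ex, ey, ez}" unfolding ex_def ey_def ez_def by auto
      then have "\<phi> e' = e'" by (rule phi_o)
      then show ?thesis using 1 by (metis imageI)
    next
      case 2
      then show ?thesis unfolding N_def using phi_sp exE by (metis empty_iff image_eqI insertE)
    qed
  qed
  have adj: "{e', f'} \<in> (image \<phi>) ` edges (line_graph G)"
    if ef': "e' \<in> \<phi> ` edges G" "f' \<in> \<phi> ` edges G" "e' \<noteq> f'" "e' \<inter> f' \<noteq> {}" for e' f'
  proof -
    obtain e where e: "e \<in> edges G" "e' = \<phi> e" using ef'(1) by blast
    obtain f where f: "f \<in> edges G" "f' = \<phi> f" using ef'(2) by blast
    have ef: "e \<noteq> f" using e f ef'(3) by blast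
    obtain u where u: "u \<in> e'" "u \<in> f'" using ef'(4) by blast
    have sub: "\<phi> h \<inter> verts G \<subseteq> h" if "h \<in> edges G" for h
    proof (cases "h \<in> {ex, ey, ez}")
      case True
      then consider "h = ex" | "h = ey" | "h = ez" by blast
      then show ?thesis
      proof cases
        case 1 then show ?thesis using NV[of nx ex] phi_sp(1) by simp
      next
        case 2 then show ?thesis using NV[of ny ey] phi_sp(2) by simp
      next
        case 3 then show ?thesis using NV[of nz ez] phi_sp(3) by simp
      qed
    next
      case False then show ?thesis using phi_o[OF False] by simp
    qed
    have "e \<inter> f \<noteq> {}"
    proof (cases "u \<in> verts G")
      case True
      then have "u \<in> e" "u \<in> f" using sub[OF e(1)] sub[OF f(1)] u e(2) f(2) by auto
      then show ?thesis by blast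
    next
      case False
      have "e \<in> {ex, ey, ez}"
      proof (rule ccontr)
        assume "e \<notin> {ex, ey, ez}"
        then have "e' = e" using phi_o e(2) by simp
        then show False using u(1) False graph_edge_sub[OF g e(1)] by blast
      qed
      moreover have "f \<in> {ex, ey, ez}"
      proof (rule ccontr)
        assume "f \<notin> {ex, ey, ez}"
        then have "f' = f" using phi_o f(2) by simp
        then show False using u(2) False graph_edge_sub[OF g f(1)] by blast
      qed
      ultimately have "\<phi> e \<in> N" "\<phi> f \<in> N" using phiN[OF e(1)] phiN[OF f(1)] by simp_all
      then have "e' \<in> N" "f' \<in> N" using e(2) f(2) by simp_all
      then have "e' \<inter> f' = {}" using Ndisj ef'(3) by blast
      then show ?thesis using u by blast
    qed
    then have "{e, f} \<in> edges (line_graph G)" unfolding line_edges using e(1) f(1) ef by blast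
    moreover have "image \<phi> {e, f} = {e', f'}" using e f by simp
    ultimately show ?thesis by (metis imageI)
  qed
  note tp = td_parts[OF td]
  define A where "A h = {t\<in>verts T. h \<in> b t}" for h
  have Asub: "A h \<subseteq> verts T" for h unfolding A_def by blast
  have Acon: "connected_in T (A h)" if "h \<in> edges G" for h
    unfolding A_def using bspec[OF tp(5)] that by simp
  have Aint: "A h1 \<inter> A h2 \<noteq> {}" if h: "h1 \<in> {ex, ey, ez}" "h2 \<in> {ex, ey, ez}" for h1 h2
  proof (cases "h1 = h2")
    case True
    have "h1 \<in> edges G" using h(1) exE by auto
    then have "h1 \<in> verts (line_graph G)" by simp
    then obtain t where "t \<in> verts T" "h1 \<in> b t" using bspec[OF tp(3)] by blast
    then show ?thesis unfolding A_def using True by blast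
  next
    case False
    have "v \<in> h1" "v \<in> h2" using h unfolding ex_def ey_def ez_def by auto
    moreover have "h1 \<in> edges G" "h2 \<in> edges G" using h exE by auto
    ultimately have "{h1, h2} \<in> edges (line_graph G)" unfolding line_edges using False by blast
    then obtain t where "t \<in> verts T" "{h1, h2} \<subseteq> b t" using tp(4) by blast
    then show ?thesis unfolding A_def by blast
  qed
  have "A ex \<inter> A ey \<inter> A ez \<noteq> {}"
    by (rule helly3[OF tp(1) Asub Asub Asub Acon[OF exE(1)] Acon[OF exE(2)] Acon[OF exE(3)]])
       (rule Aint; simp)+
  then obtain t where t: "t \<in> verts T" "ex \<in> b t" "ey \<in> b t" "ez \<in> b t" unfolding A_def by blast
  then have "\<phi> ex \<in> \<phi> ` b t" "\<phi> ey \<in> \<phi> ` b t" "\<phi> ez \<in> \<phi> ` b t" by auto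
  then have "N \<subseteq> \<phi> ` b t" unfolding N_def phi_sp by simp
  then have ex': "\<exists>t\<in>verts T. {{x, x'}, {y, y'}, {z, z'}} \<subseteq> \<phi> ` b t"
    using t(1) unfolding N_def nx_def ny_def nz_def by blast
  have img': "\<phi> ` edges G = {e\<in>edges G. v \<notin> e} \<union> {{x, x'}, {y, y'}, {z, z'}}"
    using img unfolding N_def nx_def ny_def nz_def .
  have adjall: "\<forall>e\<in>\<phi> ` edges G. \<forall>f\<in>\<phi> ` edges G. e \<noteq> f \<and> e \<inter> f \<noteq> {} \<longrightarrow>
        {e, f} \<in> (image \<phi>) ` edges (line_graph G)" using adj by blast
  show ?thesis by (intro exI[of _ \<phi>] conjI inj img' adjall ex')
qed



lemma base_step:
  assumes g: "graph H" and tw: "treewidth (line_graph H) \<le> w"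
  shows "\<exists>T b. tree_decomposition (line_graph H) T b \<and> (\<forall>t\<in>verts T. card (b t) \<le> w + 1)"
proof -
  define P where "P k = (\<exists>T bag. tree_decomposition (line_graph H) T bag \<and>
                                   (\<forall>t\<in>verts T. card (bag t) \<le> k + 1))" for k
  have fe: "finite (edges H)" using graph_finite_edges[OF g] .
  have "tree_decomposition (line_graph H) ({0::nat}, {}) (\<lambda>_. verts (line_graph H))"
    by (rule td_trivial) (auto simp: fe line_edges)
  moreover have "\<forall>t\<in>verts ({0::nat}, {}). card (verts (line_graph H)) \<le> card (edges H) + 1" by simp
  ultimately have "P (card (edges H))" unfolding P_def by blast
  then have "P (LEAST k. P k)" by (rule LeastI)
  moreover have "(LEAST k. P k) = treewidth (line_graph H)" unfolding treewidth_def P_def ..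
  ultimately have "P (treewidth (line_graph H))" by simp
  then obtain T bag where tdb: "tree_decomposition (line_graph H) T bag"
    and cb: "\<forall>t\<in>verts T. card (bag t) \<le> treewidth (line_graph H) + 1" unfolding P_def by blast
  have "\<forall>t\<in>verts T. card (bag t) \<le> w + 1"
  proof
    fix t assume "t \<in> verts T"
    then have "card (bag t) \<le> treewidth (line_graph H) + 1" using cb by blast
    then show "card (bag t) \<le> w + 1" using tw by linarith
  qed
  then show ?thesis using tdb by blast
qed

lemma graph_image:
  assumes g: "graph G" and inj: "inj_on f (verts G)"
  shows "graph (f ` verts G, (image f) ` edges G)"
  unfolding graph_def verts_pair edges_pair
proof (intro conjI ballI)
  show "finite (f ` verts G)" using graph_finite[OF g] by blast
  fix e assume "e \<in> (image f) ` edges G"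
  then obtain e' where e': "e' \<in> edges G" "e = f ` e'" by blast
  then obtain x y where xy: "x \<noteq> y" "x \<in> verts G" "y \<in> verts G" "e' = {x, y}"
    using graph_edge[OF g] by blast
  have "f x \<noteq> f y" using inj xy unfolding inj_on_def by blast
  then show "\<exists>x y. x \<noteq> y \<and> x \<in> f ` verts G \<and> y \<in> f ` verts G \<and> e = {x, y}"
    using xy e' by auto
qed

lemma iso_step:
  assumes g: "graph G" and iso: "graph_iso G H"
    and td: "tree_decomposition (line_graph G) T b" and k: "\<forall>t\<in>verts T. card (b t) \<le> K"
  shows "graph H \<and> (\<exists>T b. tree_decomposition (line_graph H) T b \<and> (\<forall>t\<in>verts T. card (b t) \<le> K))"
proof -
  obtain f where bij: "bij_betw f (verts G) (verts H)" and eH: "edges H = (\<lambda>e. f ` e) ` edges G"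
    using iso unfolding graph_iso_def by blast
  have inj: "inj_on f (verts G)" and vH: "verts H = f ` verts G"
    using bij unfolding bij_betw_def by auto
  have Hp: "H = (f ` verts G, (image f) ` edges G)"
    using vH eH by (metis prod.collapse verts_def edges_def)
  have gH: "graph H" using graph_image[OF g inj] Hp by simp
  have injE: "inj_on (image f) (edges G)"
    using inj_on_image_Pow[OF inj] graph_edge_sub[OF g] by (meson PowI inj_on_subset subsetI)
  have td': "tree_decomposition ((image f) ` verts (line_graph G), (image (image f)) ` edges (line_graph G))
      T (\<lambda>t. (image f) ` b t)"
    using td_map[OF td] injE by simp
  have ve: "verts (line_graph H) = (image f) ` verts (line_graph G)" using eH by simp
  have ee: "edges (line_graph H) \<subseteq> (image (image f)) ` edges (line_graph G)"
  proof
    fix E assume "E \<in> edges (line_graph H)"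
    then obtain e' f' where ef': "E = {e', f'}" "e' \<in> edges H" "f' \<in> edges H" "e' \<noteq> f'" "e' \<inter> f' \<noteq> {}"
      unfolding line_edges by blast
    obtain e where e: "e \<in> edges G" "e' = f ` e" using ef'(2) eH by blast
    obtain h where h: "h \<in> edges G" "f' = f ` h" using ef'(3) eH by blast
    have "e \<noteq> h" using e h ef'(4) by blast
    moreover have "e \<inter> h \<noteq> {}"
    proof -
      obtain u where "u \<in> f ` e" "u \<in> f ` h" using ef'(5) e h by blast
      then obtain a c where ac: "a \<in> e" "c \<in> h" "f a = f c" by blast
      have "a \<in> verts G" "c \<in> verts G" using ac graph_edge_sub[OF g e(1)] graph_edge_sub[OF g h(1)] by blast+
      then have "a = c" using inj ac(3) unfolding inj_on_def by blast
      then show ?thesis using ac by blast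
    qed
    ultimately have "{e, h} \<in> edges (line_graph G)" unfolding line_edges using e(1) h(1) by blast
    moreover have "image (image f) {e, h} = E" using ef'(1) e h by simp
    ultimately show "E \<in> (image (image f)) ` edges (line_graph G)" by (metis imageI)
  qed
  have "tree_decomposition (line_graph H) T (\<lambda>t. (image f) ` b t)"
    by (rule td_mono_edges[OF td']) (use ve ee in simp_all)
  moreover have "\<forall>t\<in>verts T. card ((image f) ` b t) \<le> K"
  proof
    fix t assume t: "t \<in> verts T"
    have "b t \<subseteq> edges G" using bspec[OF td_parts(2)[OF td] t] by simp
    then have "finite (b t)" using graph_finite_edges[OF g] finite_subset by blast
    then have "card ((image f) ` b t) \<le> card (b t)" by (rule card_image_le)
    then show "card ((image f) ` b t) \<le> K" using k t by force
  qed
  ultimately show ?thesis using gH by blast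
qed



lemma bridge_verts: "verts (bridge G1 v1 G2 v2 x1 y1 z1 x2 y2 z2) = (verts G1 - {v1}) \<union> (verts G2 - {v2})"
  unfolding bridge_def by simp

lemma bridge_edges: "edges (bridge G1 v1 G2 v2 x1 y1 z1 x2 y2 z2) =
   {e \<in> edges G1. v1 \<notin> e} \<union> {e \<in> edges G2. v2 \<notin> e} \<union> {{x1, x2}, {y1, y2}, {z1, z2}}"
  unfolding bridge_def by simp

lemma nbhd_facts:
  assumes g: "graph G" and nb: "nbhd G v = {x, y, z}"
  shows "{x, y, z} \<subseteq> verts G - {v}"
proof -
  have "{u, v} \<in> edges G" if "u \<in> {x, y, z}" for u using nb that nbhd_edge by metis
  then have "u \<in> verts G \<and> u \<noteq> v" if "u \<in> {x, y, z}" for u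
    using that graph_edge_sub[OF g] graph_edge_card[OF g] by fastforce
  then show ?thesis by blast
qed

lemma td_card_image:
  assumes g: "graph G" and td: "tree_decomposition (line_graph G) T b"
    and k: "\<forall>t\<in>verts T. card (b t) \<le> K"
  shows "\<forall>t\<in>verts T. card (f ` b t) \<le> K"
proof
  fix t assume t: "t \<in> verts T"
  have "b t \<subseteq> edges G" using bspec[OF td_parts(2)[OF td] t] by simp
  then have "finite (b t)" using graph_finite_edges[OF g] finite_subset by blast
  then have "card (f ` b t) \<le> card (b t)" by (rule card_image_le)
  then show "card (f ` b t) \<le> K" using k t by force
qed

lemma bridge_step:
  assumes g1: "graph G1" and g2: "graph G2" and disj: "verts G1 \<inter> verts G2 = {}"
    and v1: "v1 \<in> verts G1" and v2: "v2 \<in> verts G2"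
    and nb1: "nbhd G1 v1 = {x1, y1, z1}" and c1: "card {x1, y1, z1} = 3"
    and nb2: "nbhd G2 v2 = {x2, y2, z2}" and c2: "card {x2, y2, z2} = 3"
    and td1: "tree_decomposition (line_graph G1) T1 b1" and k1: "\<forall>t\<in>verts T1. card (b1 t) \<le> K"
    and td2: "tree_decomposition (line_graph G2) (T2::nat graph) b2" and k2: "\<forall>t\<in>verts T2. card (b2 t) \<le> K"
  shows "graph (bridge G1 v1 G2 v2 x1 y1 z1 x2 y2 z2) \<and>
    (\<exists>T b. tree_decomposition (line_graph (bridge G1 v1 G2 v2 x1 y1 z1 x2 y2 z2)) T b \<and>
       (\<forall>t\<in>verts T. card (b t) \<le> K))"
proof -
  define G where "G = bridge G1 v1 G2 v2 x1 y1 z1 x2 y2 z2"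
  have s1: "{x1, y1, z1} \<subseteq> verts G1 - {v1}" using nbhd_facts[OF g1 nb1] .
  have s2: "{x2, y2, z2} \<subseteq> verts G2 - {v2}" using nbhd_facts[OF g2 nb2] .
  have out1: "{x2, y2, z2} \<inter> verts G1 = {}" using s2 disj by blast
  have out2: "{x1, y1, z1} \<inter> verts G2 = {}" using s1 disj by blast
  define N where "N = {{x1, x2}, {y1, y2}, {z1, z2}}"
  have N2: "{{x2, x1}, {y2, y1}, {z2, z1}} = N" unfolding N_def by (simp add: insert_commute)
  define O1 where "O1 = {e \<in> edges G1. v1 \<notin> e}"
  define O2 where "O2 = {e \<in> edges G2. v2 \<notin> e}"
  from side[OF g1 v1 nb1 c1 c2 out1 td1]
  obtain \<phi>1 where inj1: "inj_on \<phi>1 (edges G1)"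
    and img1': "\<phi>1 ` edges G1 = {e\<in>edges G1. v1 \<notin> e} \<union> {{x1, x2}, {y1, y2}, {z1, z2}}"
    and adj1: "\<forall>e\<in>\<phi>1 ` edges G1. \<forall>f\<in>\<phi>1 ` edges G1. e \<noteq> f \<and> e \<inter> f \<noteq> {} \<longrightarrow>
        {e, f} \<in> (image \<phi>1) ` edges (line_graph G1)"
    and bag1': "\<exists>t\<in>verts T1. {{x1, x2}, {y1, y2}, {z1, z2}} \<subseteq> \<phi>1 ` b1 t"
    by (elim exE conjE) (rule that)
  from side[OF g2 v2 nb2 c2 c1 out2 td2]
  obtain \<phi>2 where inj2: "inj_on \<phi>2 (edges G2)"
    and img2': "\<phi>2 ` edges G2 = {e\<in>edges G2. v2 \<notin> e} \<union> {{x2, x1}, {y2, y1}, {z2, z1}}"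
    and adj2: "\<forall>e\<in>\<phi>2 ` edges G2. \<forall>f\<in>\<phi>2 ` edges G2. e \<noteq> f \<and> e \<inter> f \<noteq> {} \<longrightarrow>
        {e, f} \<in> (image \<phi>2) ` edges (line_graph G2)"
    and bag2': "\<exists>t\<in>verts T2. {{x2, x1}, {y2, y1}, {z2, z1}} \<subseteq> \<phi>2 ` b2 t"
    by (elim exE conjE) (rule that)
  have img1: "\<phi>1 ` edges G1 = O1 \<union> N" using img1' unfolding O1_def N_def .
  have bag1: "\<exists>t\<in>verts T1. N \<subseteq> \<phi>1 ` b1 t" using bag1' unfolding N_def .
  have img2: "\<phi>2 ` edges G2 = O2 \<union> N" using img2' unfolding O2_def N2 .
  have bag2: "\<exists>t\<in>verts T2. N \<subseteq> \<phi>2 ` b2 t" using bag2' unfolding N2 .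
  obtain t1 where t1: "t1 \<in> verts T1" "N \<subseteq> \<phi>1 ` b1 t1" using bag1 by blast
  obtain t2 where t2: "t2 \<in> verts T2" "N \<subseteq> \<phi>2 ` b2 t2" using bag2 by blast
  have O1V: "e \<subseteq> verts G1" "card e = 2" if "e \<in> O1" for e
    using that graph_edge_sub[OF g1] graph_edge_card[OF g1] unfolding O1_def by auto
  have O2V: "e \<subseteq> verts G2" "card e = 2" if "e \<in> O2" for e
    using that graph_edge_sub[OF g2] graph_edge_card[OF g2] unfolding O2_def by auto
  have NV1: "\<not> n \<subseteq> verts G1" if "n \<in> N" for n using that out1 unfolding N_def by auto
  have NV2: "\<not> n \<subseteq> verts G2" if "n \<in> N" for n using that out2 unfolding N_def by auto
  have O12: "e \<notin> O2" if "e \<in> O1" for e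
  proof
    assume "e \<in> O2"
    then have "e = {}" using O1V(1)[OF that] O2V(1) disj by blast
    then show False using O1V(2)[OF that] by simp
  qed
  have int: "\<phi>1 ` edges G1 \<inter> \<phi>2 ` edges G2 \<subseteq> N"
    unfolding img1 img2 using O12 O1V(1) O2V(1) NV1 NV2 by blast
  have td1': "tree_decomposition (\<phi>1 ` edges G1, (image \<phi>1) ` edges (line_graph G1)) T1 (\<lambda>t. \<phi>1 ` b1 t)"
    using td_map[OF td1] inj1 by simp
  have td2': "tree_decomposition (\<phi>2 ` edges G2, (image \<phi>2) ` edges (line_graph G2)) T2 (\<lambda>t. \<phi>2 ` b2 t)"
    using td_map[OF td2] inj2 by simp
  have sep: "verts (\<phi>1 ` edges G1, (image \<phi>1) ` edges (line_graph G1)) \<inter>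
      verts (\<phi>2 ` edges G2, (image \<phi>2) ` edges (line_graph G2)) \<subseteq> \<phi>1 ` b1 t1 \<inter> \<phi>2 ` b2 t2"
    unfolding verts_pair using int t1(2) t2(2) by (meson inf.bounded_iff order_trans)
  from td_glue_ex[OF td1' td2' t1(1) t2(1) sep td_card_image[OF g1 td1 k1] td_card_image[OF g2 td2 k2]]
  obtain T b where td: "tree_decomposition (\<phi>1 ` edges G1 \<union> \<phi>2 ` edges G2,
      (image \<phi>1) ` edges (line_graph G1) \<union> (image \<phi>2) ` edges (line_graph G2)) T b"
    and kb: "\<forall>t\<in>verts T. card (b t) \<le> K" unfolding verts_pair edges_pair by blast
  have eG: "edges G = O1 \<union> O2 \<union> N" unfolding G_def bridge_edges O1_def O2_def N_def ..
  have ve: "verts (line_graph G) = \<phi>1 ` edges G1 \<union> \<phi>2 ` edges G2"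
    unfolding line_verts eG img1 img2 by blast
  have ee: "edges (line_graph G) \<subseteq> (image \<phi>1) ` edges (line_graph G1) \<union> (image \<phi>2) ` edges (line_graph G2)"
  proof
    fix E assume "E \<in> edges (line_graph G)"
    then obtain e f where ef: "E = {e, f}" "e \<in> edges G" "f \<in> edges G" "e \<noteq> f" "e \<inter> f \<noteq> {}"
      unfolding line_edges by blast
    have eo: "e \<in> O1 \<or> e \<in> O2 \<or> e \<in> N" using ef(2) unfolding eG by blast
    have fo: "f \<in> O1 \<or> f \<in> O2 \<or> f \<in> N" using ef(3) unfolding eG by blast
    have c12: "e \<inter> f = {}" if "e \<in> O1" "f \<in> O2" for e f
      using O1V(1)[OF that(1)] O2V(1)[OF that(2)] disj by blast
    consider "e \<in> O1 \<union> N \<and> f \<in> O1 \<union> N" | "e \<in> O2 \<union> N \<and> f \<in> O2 \<union> N"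
      | "e \<in> O1 \<and> f \<in> O2" | "e \<in> O2 \<and> f \<in> O1"
      using eo fo by blast
    then show "E \<in> (image \<phi>1) ` edges (line_graph G1) \<union> (image \<phi>2) ` edges (line_graph G2)"
    proof cases
      case 1
      then have "e \<in> \<phi>1 ` edges G1" "f \<in> \<phi>1 ` edges G1" unfolding img1 by blast+
      then have "{e, f} \<in> (image \<phi>1) ` edges (line_graph G1)" using adj1 ef(4,5) by blast
      then show ?thesis unfolding ef(1) by blast
    next
      case 2
      then have "e \<in> \<phi>2 ` edges G2" "f \<in> \<phi>2 ` edges G2" unfolding img2 by blast+
      then have "{e, f} \<in> (image \<phi>2) ` edges (line_graph G2)" using adj2 ef(4,5) by blast
      then show ?thesis unfolding ef(1) by blast
    next
      case 3
      then have "e \<inter> f = {}" using c12 by blast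
      then show ?thesis using ef(5) by blast
    next
      case 4
      then have "f \<inter> e = {}" using c12 by blast
      then show ?thesis using ef(5) by blast
    qed
  qed
  have tdG: "tree_decomposition (line_graph G) T b"
    by (rule td_mono_edges[OF td]) (use ve ee in simp_all)
  have gG: "graph G"
    unfolding graph_def
  proof (intro conjI ballI)
    show "finite (verts G)" unfolding G_def bridge_verts
      using graph_finite[OF g1] graph_finite[OF g2] by blast
    fix e assume "e \<in> edges G"
    then consider "e \<in> O1" | "e \<in> O2" | "e \<in> N" unfolding eG by blast
    then show "\<exists>x y. x \<noteq> y \<and> x \<in> verts G \<and> y \<in> verts G \<and> e = {x, y}"
    proof cases
      case 1
      then obtain x y where "x \<noteq> y" "x \<in> verts G1" "y \<in> verts G1" "e = {x, y}" "v1 \<notin> e"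
        using graph_edge[OF g1] unfolding O1_def by blast
      then show ?thesis unfolding G_def bridge_verts by blast
    next
      case 2
      then obtain x y where "x \<noteq> y" "x \<in> verts G2" "y \<in> verts G2" "e = {x, y}" "v2 \<notin> e"
        using graph_edge[OF g2] unfolding O2_def by blast
      then show ?thesis unfolding G_def bridge_verts by blast
    next
      case 3
      then consider "e = {x1, x2}" | "e = {y1, y2}" | "e = {z1, z2}" unfolding N_def by blast
      then show ?thesis
      proof cases
        case 1
        have "x1 \<in> verts G1 - {v1}" "x2 \<in> verts G2 - {v2}" using s1 s2 by auto
        moreover have "x1 \<noteq> x2" using calculation disj by blast
        ultimately show ?thesis unfolding G_def bridge_verts using 1 by blast
      next
        case 2
        have "y1 \<in> verts G1 - {v1}" "y2 \<in> verts G2 - {v2}" using s1 s2 by auto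
        moreover have "y1 \<noteq> y2" using calculation disj by blast
        ultimately show ?thesis unfolding G_def bridge_verts using 2 by blast
      next
        case 3
        have "z1 \<in> verts G1 - {v1}" "z2 \<in> verts G2 - {v2}" using s1 s2 by auto
        moreover have "z1 \<noteq> z2" using calculation disj by blast
        ultimately show ?thesis unfolding G_def bridge_verts using 3 by blast
      qed
    qed
  qed
  show ?thesis using gG tdG kb unfolding G_def by blast
qed


theorem theorem14:
  fixes B :: "'a graph set" and w :: nat
  assumes "\<forall>H\<in>B. graph H"
    and "\<forall>H\<in>B. treewidth (line_graph H) \<le> w"
  shows "\<forall>G\<in>bridge_closure B. treewidth G \<le> 2 * w + 1"
proof
  fix G assume G: "G \<in> bridge_closure B"
  have inv: "graph G \<and> (\<exists>T b. tree_decomposition (line_graph G) T b \<and>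
      (\<forall>t\<in>verts T. card (b t) \<le> w + 1))"
    using G
  proof (induction rule: bridge_closure.induct)
    case (base G)
    then show ?case using assms base_step by blast
  next
    case (iso G H)
    then obtain T b where "tree_decomposition (line_graph G) T b" "\<forall>t\<in>verts T. card (b t) \<le> w + 1"
      by blast
    then show ?case using iso_step iso by blast
  next
    case (bridge G1 G2 v1 v2 x1 y1 z1 x2 y2 z2)
    obtain T1 b1 where 1: "tree_decomposition (line_graph G1) T1 b1" "\<forall>t\<in>verts T1. card (b1 t) \<le> w + 1"
      using bridge.IH(1) by blast
    obtain T2 b2 where 2: "tree_decomposition (line_graph G2) T2 b2" "\<forall>t\<in>verts T2. card (b2 t) \<le> w + 1"
      using bridge.IH(2) by blast
    show ?case
      using bridge_step[OF _ _ bridge.hyps(3-9) 1 2] bridge.IH by blast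
  qed
  then obtain T b where g: "graph G" and td: "tree_decomposition (line_graph G) T b"
    and k: "\<forall>t\<in>verts T. card (b t) \<le> w + 1" by blast
  obtain T' b' where td': "tree_decomposition G T' b'"
    and k': "\<forall>t\<in>verts T'. card (b' t) \<le> 2 * (w + 1)"
    using L_to_G[OF g td k] by auto
  have "\<exists>T bag. tree_decomposition G T bag \<and> (\<forall>t\<in>verts T. card (bag t) \<le> (2 * w + 1) + 1)"
    using td' k' by (intro exI[of _ T'] exI[of _ b']) simp
  then show "treewidth G \<le> 2 * w + 1"
    unfolding treewidth_def by (rule Least_le)
qed

end
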